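(* Let $P(Y)\in R[Y]$ be $m$-triangular and let $Q(Y)\in R[Y]$ be linear. Then: (0) for every $q\in\mathbb{Q}_+$, $qP(Y)$ is $m$-triangular and $qQ(Y)$ is linear; (1) if $\deg P(Y)\ge a+1$, then $P'(Y)$ is $m$-triangular; (2) if $Q(Y)$ is nonconstant, then $Q'(Y)$ is linear; (3) $P(Y)Q(Y)$ is $(m+1)$-triangular.
   Context: Fix a positive integer $a$ and variables $u_0,\ldots,u_a$. Let $R=\mathbb{C}[u_0,\ldots,u_{a-1}][u_a,u_a^{-1}]$. $\mathbb{Q}_+$ denotes the positive rational numbers. For an integer $m\ge1$, a polynomial $P(Y)=\sum_{l=0}^dp_lY^l\in R[Y]$ of degree $d\ge a$ is called $m$-triangular if for every $l$ with $d-a\le l\le d$ one has $p_l=q_lu_a^{m-1}u_{a-d+l}+P_l(u_{a-d+l+1},\ldots,u_a)$ for some $q_l\in\mathbb{Q}_+$ and some polynomial $P_l\in\mathbb{C}[u_{a-d+l+1},\ldots,u_a]$ (for $l=d$ this means $p_d=q_du_a^m$). A polynomial $P(Y)=\sum_{l=0}^dp_lY^l\in R[Y]$ is called linear (or $U$-linear) if $0\le d=\deg P(Y)\le a$ and $p_l\in\mathbb{Q}_+u_{a-d+l}$ for all $l\in\{0,\ldots,d\}$. Derivatives are with respect to $Y$. *)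

theory Defs
  imports "HOL-Library.Poly_Mapping" "HOL-Computational_Algebra.Polynomial"
begin

text \<open>Elements of the Laurent polynomial ring C[u_0,...,u_a, u_a^(-1)] are modelled as
  finitely supported maps from integer exponent vectors (variable index to exponent)
  to complex coefficients.\<close>

type_synonym lpoly = "(nat \<Rightarrow>\<^sub>0 int) \<Rightarrow>\<^sub>0 complex"

definition U :: "nat \<Rightarrow> lpoly" where
  "U i = Poly_Mapping.single (Poly_Mapping.single i 1) 1"

definition Qc :: "rat \<Rightarrow> lpoly" where
  "Qc q = Poly_Mapping.single 0 (of_rat q)"

definition in_R :: "nat \<Rightarrow> lpoly \<Rightarrow> bool" where
  "in_R a f \<longleftrightarrow> (\<forall>mon \<in> Poly_Mapping.keys f. \<forall>i.
      (a < i \<longrightarrow> Poly_Mapping.lookup mon i = 0) \<and> (i < a \<longrightarrow> 0 \<le> Poly_Mapping.lookup mon i))"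

definition in_CU :: "nat \<Rightarrow> nat \<Rightarrow> lpoly \<Rightarrow> bool" where
  "in_CU j a f \<longleftrightarrow> (\<forall>mon \<in> Poly_Mapping.keys f. \<forall>i.
      0 \<le> Poly_Mapping.lookup mon i \<and> ((i < j \<or> a < i) \<longrightarrow> Poly_Mapping.lookup mon i = 0))"

definition in_RY :: "nat \<Rightarrow> lpoly poly \<Rightarrow> bool" where
  "in_RY a P \<longleftrightarrow> (\<forall>l. in_R a (coeff P l))"

definition triangular :: "nat \<Rightarrow> nat \<Rightarrow> lpoly poly \<Rightarrow> bool" where
  "triangular a m P \<longleftrightarrow> in_RY a P \<and> a \<le> Polynomial.degree P \<and>
     (\<forall>l. Polynomial.degree P - a \<le> l \<and> l < Polynomial.degree P \<longrightarrow>
        (\<exists>q::rat. 0 < q \<and> (\<exists>Pl. in_CU (a + l + 1 - Polynomial.degree P) a Pl \<and>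
            coeff P l = Qc q * U a ^ (m - 1) * U (a + l - Polynomial.degree P) + Pl))) \<and>
     (\<exists>q::rat. 0 < q \<and> coeff P (Polynomial.degree P) = Qc q * U a ^ m)"

definition U_linear :: "nat \<Rightarrow> lpoly poly \<Rightarrow> bool" where
  "U_linear a Q \<longleftrightarrow> Polynomial.degree Q \<le> a \<and>
     (\<forall>l \<le> Polynomial.degree Q. \<exists>q::rat. 0 < q \<and>
        coeff Q l = Qc q * U (a + l - Polynomial.degree Q))"

end

theory Submission
  imports Defs
begin

definition CUm :: "nat \<Rightarrow> nat \<Rightarrow> (nat \<Rightarrow>\<^sub>0 int) \<Rightarrow> bool" where
  "CUm j a mon \<longleftrightarrow> (\<forall>i. 0 \<le> Poly_Mapping.lookup mon i \<and> ((i < j \<or> a < i) \<longrightarrow> Poly_Mapping.lookup mon i = 0))"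

definition Rm :: "nat \<Rightarrow> (nat \<Rightarrow>\<^sub>0 int) \<Rightarrow> bool" where
  "Rm a mon \<longleftrightarrow> (\<forall>i. (a < i \<longrightarrow> Poly_Mapping.lookup mon i = 0) \<and> (i < a \<longrightarrow> 0 \<le> Poly_Mapping.lookup mon i))"

lemma CUm_add: "CUm j a x \<Longrightarrow> CUm j a y \<Longrightarrow> CUm j a (x + y)"
  by (auto simp: CUm_def lookup_add)

lemma Rm_add: "Rm a x \<Longrightarrow> Rm a y \<Longrightarrow> Rm a (x + y)"
  by (auto simp: Rm_def lookup_add)

lemma in_CU_iff: "in_CU j a f \<longleftrightarrow> (\<forall>k\<in>Poly_Mapping.keys f. CUm j a k)"
  by (simp add: in_CU_def CUm_def)

lemma in_R_iff: "in_R a f \<longleftrightarrow> (\<forall>k\<in>Poly_Mapping.keys f. Rm a k)"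
  by (simp add: in_R_def Rm_def)

lemma keys_pred_add:
  assumes "\<forall>k\<in>Poly_Mapping.keys (f::lpoly). C k" "\<forall>k\<in>Poly_Mapping.keys g. C k"
  shows "\<forall>k\<in>Poly_Mapping.keys (f + g). C k"
  using assms keys_add[of f g] by blast

lemma keys_pred_mult:
  assumes "\<forall>k\<in>Poly_Mapping.keys (f::lpoly). C k" "\<forall>k\<in>Poly_Mapping.keys g. C k"
    and "\<And>x y. C x \<Longrightarrow> C y \<Longrightarrow> C (x + y)"
  shows "\<forall>k\<in>Poly_Mapping.keys (f * g). C k"
  using assms keys_mult[of f g] by blast

lemma in_CU_add: "in_CU j a f \<Longrightarrow> in_CU j a g \<Longrightarrow> in_CU j a (f + g)"
  unfolding in_CU_iff by (rule keys_pred_add)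

lemma in_CU_mult: "in_CU j a f \<Longrightarrow> in_CU j a g \<Longrightarrow> in_CU j a (f * g)"
  unfolding in_CU_iff by (rule keys_pred_mult) (auto intro: CUm_add)

lemma in_R_add: "in_R a f \<Longrightarrow> in_R a g \<Longrightarrow> in_R a (f + g)"
  unfolding in_R_iff by (rule keys_pred_add)

lemma in_R_mult: "in_R a f \<Longrightarrow> in_R a g \<Longrightarrow> in_R a (f * g)"
  unfolding in_R_iff by (rule keys_pred_mult) (auto intro: Rm_add)

lemma in_CU_0: "in_CU j a 0"
  by (simp add: in_CU_def)

lemma in_R_0: "in_R a 0"
  by (simp add: in_R_def)

lemma in_CU_sum: "(\<And>i. i \<in> S \<Longrightarrow> in_CU j a (f i)) \<Longrightarrow> in_CU j a (sum f S)"
  by (induction S rule: infinite_finite_induct) (auto intro: in_CU_add in_CU_0)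

lemma in_R_sum: "(\<And>i. i \<in> S \<Longrightarrow> in_R a (f i)) \<Longrightarrow> in_R a (sum f S)"
  by (induction S rule: infinite_finite_induct) (auto intro: in_R_add in_R_0)

lemma in_CU_mono: "j' \<le> j \<Longrightarrow> in_CU j a f \<Longrightarrow> in_CU j' a f"
  unfolding in_CU_def using order.strict_trans2 by blast

lemma in_CU_R: "in_CU j a f \<Longrightarrow> in_R a f"
  unfolding in_CU_def in_R_def by auto

lemma in_CU_single0: "in_CU j a (Poly_Mapping.single 0 c)"
  by (simp add: in_CU_def)

lemma in_CU_Qc: "in_CU j a (Qc q)"
  by (simp add: Qc_def in_CU_single0)

lemma in_CU_of_nat: "in_CU j a (of_nat n)"
  by (metis in_CU_single0 single_of_nat)

lemma in_CU_U: "j \<le> i \<Longrightarrow> i \<le> a \<Longrightarrow> in_CU j a (U i)"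
  by (auto simp: in_CU_def U_def lookup_single when_def)

lemma in_CU_pow: "in_CU j a f \<Longrightarrow> in_CU j a (f ^ n)"
proof (induction n)
  case 0 show ?case using in_CU_single0[of j a 1] by simp
next
  case (Suc n) thus ?case by (simp add: in_CU_mult)
qed

lemma Qc_mult: "Qc (q * r) = Qc q * Qc r"
  by (simp add: Qc_def mult_single of_rat_mult)

lemma Qc_add: "Qc (q + r) = Qc q + Qc r"
  by (simp add: Qc_def single_add of_rat_add)

lemma Qc_0: "Qc 0 = 0"
  by (simp add: Qc_def)

lemma of_nat_Qc: "of_nat n * Qc q = Qc (of_nat n * q)"
  by (metis Qc_def Qc_mult of_rat_of_nat_eq single_of_nat)

lemma U_pow: "U i ^ n = Poly_Mapping.single (Poly_Mapping.single i (int n)) 1"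
proof (induction n)
  case 0 then show ?case by simp
next
  case (Suc n)
  then show ?case
    by (simp add: U_def mult_single flip: single_add)
qed

lemma Qc_U_pow_nz: "q \<noteq> 0 \<Longrightarrow> Qc q * U i ^ n \<noteq> 0"
proof
  assume q: "q \<noteq> 0" and h: "Qc q * U i ^ n = 0"
  have "Poly_Mapping.lookup (Qc q * U i ^ n) (Poly_Mapping.single i (int n)) = of_rat q"
    by (simp add: U_pow Qc_def mult_single)
  then show False using q h by simp
qed

lemma Qc_U_nz: "q \<noteq> 0 \<Longrightarrow> Qc q * U i \<noteq> 0"
  using Qc_U_pow_nz[of q i 1] by simp

lemma deg_eq: "degree p \<le> d \<Longrightarrow> coeff p d \<noteq> 0 \<Longrightarrow> degree p = d"
  by (simp add: le_antisym le_degree)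


lemma tri_smult:
  assumes T: "triangular a m P" and q: "0 < q"
  shows "triangular a m (smult (Qc q) P)"
proof -
  define d where "d = degree P"
  from T obtain q0 where q0: "0 < q0" "coeff P d = Qc q0 * U a ^ m"
    unfolding triangular_def d_def by blast
  have deg: "degree (smult (Qc q) P) = d"
  proof (rule deg_eq[OF degree_smult_le[of _ P, folded d_def]])
    have "coeff (smult (Qc q) P) d = Qc (q*q0) * U a ^ m" using q0 by (simp add: Qc_mult mult.assoc)
    moreover have "q*q0 \<noteq> 0" using q q0 by simp
    ultimately show "coeff (smult (Qc q) P) d \<noteq> 0" using Qc_U_pow_nz[of "q*q0" a m] by simp
  qed
  show ?thesis unfolding triangular_def deg
  proof (intro conjI allI impI)
    have "\<forall>l. in_R a (coeff P l)" using T unfolding triangular_def in_RY_def by blast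
    then show "in_RY a (smult (Qc q) P)" unfolding in_RY_def coeff_smult
      by (intro allI in_R_mult in_CU_R[OF in_CU_Qc]) blast
    show "a \<le> d" using T unfolding triangular_def d_def by blast
    fix l assume l: "d - a \<le> l \<and> l < d"
    then obtain q1 Pl where h: "0<q1" "in_CU (a + l + 1 - d) a Pl"
      "coeff P l = Qc q1 * U a ^ (m - 1) * U (a + l - d) + Pl"
      using T unfolding triangular_def d_def by blast
    then show "\<exists>q'. 0 < q' \<and> (\<exists>Pl. in_CU (a + l + 1 - d) a Pl \<and>
        coeff (smult (Qc q) P) l = Qc q' * U a ^ (m - 1) * U (a + l - d) + Pl)"
      using q by (intro exI[of _ "q*q1"] conjI exI[of _ "Qc q * Pl"])
        (auto intro: in_CU_mult in_CU_Qc simp: Qc_mult algebra_simps)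
  next
    show "\<exists>q'. 0 < q' \<and> coeff (smult (Qc q) P) d = Qc q' * U a ^ m"
      using q q0 by (intro exI[of _ "q*q0"]) (simp add: Qc_mult mult.assoc)
  qed
qed

lemma lin_smult:
  assumes L: "U_linear a Q" and q: "0 < q"
  shows "U_linear a (smult (Qc q) Q)"
proof -
  define e where "e = degree Q"
  from L obtain q0 where q0: "0 < q0" "coeff Q e = Qc q0 * U a"
    unfolding U_linear_def e_def by fastforce
  have deg: "degree (smult (Qc q) Q) = e"
  proof (rule deg_eq[OF degree_smult_le[of _ Q, folded e_def]])
    have "coeff (smult (Qc q) Q) e = Qc (q*q0) * U a" using q0 by (simp add: Qc_mult mult.assoc)
    moreover have "q*q0 \<noteq> 0" using q q0 by simp
    ultimately show "coeff (smult (Qc q) Q) e \<noteq> 0" using Qc_U_nz[of "q*q0" a] by simp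
  qed
  show ?thesis unfolding U_linear_def deg
  proof (intro conjI allI impI)
    show "e \<le> a" using L unfolding U_linear_def e_def by blast
    fix l assume "l \<le> e"
    then obtain q1 where "0 < q1" "coeff Q l = Qc q1 * U (a + l - e)"
      using L unfolding U_linear_def e_def by blast
    then show "\<exists>q'. 0 < q' \<and> coeff (smult (Qc q) Q) l = Qc q' * U (a + l - e)"
      using q by (intro exI[of _ "q*q1"]) (simp add: Qc_mult mult.assoc)
  qed
qed

lemma tri_pderiv:
  assumes T: "triangular a m P" and da: "a + 1 \<le> degree P"
  shows "triangular a m (pderiv P)"
proof -
  define d where "d = degree P"
  have d1: "1 \<le> d" using da d_def by simp
  from T obtain q0 where q0: "0 < q0" "coeff P d = Qc q0 * U a ^ m"
    unfolding triangular_def d_def by blast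
  have cd: "coeff (pderiv P) (d - 1) = Qc (of_nat d * q0) * U a ^ m"
  proof -
    have "coeff (pderiv P) (d - 1) = of_nat d * coeff P d"
      using d1 by (simp add: coeff_pderiv)
    thus ?thesis using q0 by (simp add: of_nat_Qc[symmetric] mult.assoc)
  qed
  have deg: "degree (pderiv P) = d - 1"
  proof (rule deg_eq)
    show "degree (pderiv P) \<le> d - 1"
    proof (rule degree_le, intro allI impI)
      fix i assume "d - 1 < i"
      then have "degree P < Suc i" using d_def d1 by simp
      then show "coeff (pderiv P) i = 0" by (simp add: coeff_pderiv coeff_eq_0)
    qed
    have "of_nat d * q0 \<noteq> 0" using q0 d1 by simp
    then show "coeff (pderiv P) (d - 1) \<noteq> 0" unfolding cd by (rule Qc_U_pow_nz)
  qed
  show ?thesis unfolding triangular_def deg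
  proof (intro conjI allI impI)
    have "\<forall>l. in_R a (coeff P l)" using T unfolding triangular_def in_RY_def by blast
    then show "in_RY a (pderiv P)" unfolding in_RY_def coeff_pderiv
      by (intro allI in_R_mult in_CU_R[OF in_CU_of_nat]) blast
    show "a \<le> d - 1" using da d_def by simp
    fix l assume l: "d - 1 - a \<le> l \<and> l < d - 1"
    then have "d - a \<le> Suc l \<and> Suc l < d" by arith
    then obtain q1 Pl where h: "0<q1" "in_CU (a + Suc l + 1 - d) a Pl"
      "coeff P (Suc l) = Qc q1 * U a ^ (m - 1) * U (a + Suc l - d) + Pl"
      using T unfolding triangular_def d_def by blast
    have e1: "a + l + 1 - (d - 1) = a + Suc l + 1 - d" "a + l - (d - 1) = a + Suc l - d"
      using l d1 by arith+
    have "coeff (pderiv P) l = Qc (of_nat (Suc l) * q1) * U a ^ (m - 1) * U (a + l - (d - 1))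
        + of_nat (Suc l) * Pl"
      unfolding coeff_pderiv h(3) e1 of_nat_Qc[symmetric] by (simp only: distrib_left mult.assoc)
    moreover have "in_CU (a + l + 1 - (d - 1)) a (of_nat (Suc l) * Pl)"
      unfolding e1 using h(2) by (intro in_CU_mult in_CU_of_nat)
    moreover have "0 < (of_nat (Suc l) * q1 :: rat)" using h(1) by simp
    ultimately show "\<exists>q'. 0 < q' \<and> (\<exists>Pl. in_CU (a + l + 1 - (d - 1)) a Pl \<and>
        coeff (pderiv P) l = Qc q' * U a ^ (m - 1) * U (a + l - (d - 1)) + Pl)"
      by blast
  next
    show "\<exists>q'. 0 < q' \<and> coeff (pderiv P) (d - 1) = Qc q' * U a ^ m"
      using cd q0 d1 by (intro exI[of _ "of_nat d * q0"]) simp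
  qed
qed

lemma lin_pderiv:
  assumes L: "U_linear a Q" and e1: "1 \<le> degree Q"
  shows "U_linear a (pderiv Q)"
proof -
  define e where "e = degree Q"
  have e1: "1 \<le> e" using e1 e_def by simp
  from L obtain q0 where q0: "0 < q0" "coeff Q e = Qc q0 * U a"
    unfolding U_linear_def e_def by fastforce
  have cd: "coeff (pderiv Q) (e - 1) = Qc (of_nat e * q0) * U a"
  proof -
    have "coeff (pderiv Q) (e - 1) = of_nat e * coeff Q e"
      using e1 by (simp add: coeff_pderiv)
    thus ?thesis using q0 by (simp add: of_nat_Qc[symmetric] mult.assoc)
  qed
  have deg: "degree (pderiv Q) = e - 1"
  proof (rule deg_eq)
    show "degree (pderiv Q) \<le> e - 1"
    proof (rule degree_le, intro allI impI)
      fix i assume "e - 1 < i"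
      then have "degree Q < Suc i" using e_def e1 by simp
      then show "coeff (pderiv Q) i = 0" by (simp add: coeff_pderiv coeff_eq_0)
    qed
    have "of_nat e * q0 \<noteq> 0" using q0 e1 by simp
    then show "coeff (pderiv Q) (e - 1) \<noteq> 0" unfolding cd by (rule Qc_U_nz)
  qed
  show ?thesis unfolding U_linear_def deg
  proof (intro conjI allI impI)
    have "e \<le> a" using L unfolding U_linear_def e_def by blast
    then show "e - 1 \<le> a" by simp
    fix l assume l: "l \<le> e - 1"
    then have "Suc l \<le> e" using e1 by simp
    then obtain q1 where h: "0 < q1" "coeff Q (Suc l) = Qc q1 * U (a + Suc l - e)"
      using L unfolding U_linear_def e_def by blast
    have e2: "a + l - (e - 1) = a + Suc l - e" using l e1 by arith
    have "coeff (pderiv Q) l = Qc (of_nat (Suc l) * q1) * U (a + l - (e - 1))"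
      unfolding coeff_pderiv h(2) e2 of_nat_Qc[symmetric] by (simp only: mult.assoc)
    then show "\<exists>q'. 0 < q' \<and> coeff (pderiv Q) l = Qc q' * U (a + l - (e - 1))"
      using h(1) by (intro exI[of _ "of_nat (Suc l) * q1"]) simp
  qed
qed


lemma lin_RY:
  assumes L: "U_linear a Q"
  shows "in_RY a Q"
  unfolding in_RY_def
proof
  fix j
  show "in_R a (coeff Q j)"
  proof (cases "j \<le> degree Q")
    case True
    then obtain q where "coeff Q j = Qc q * U (a + j - degree Q)"
      using L unfolding U_linear_def by blast
    moreover have "in_CU 0 a (Qc q * U (a + j - degree Q))"
      using True by (intro in_CU_mult in_CU_Qc in_CU_U) auto
    ultimately show ?thesis by (simp add: in_CU_R)
  next
    case False
    then show ?thesis by (simp add: coeff_eq_0 in_R_0)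
  qed
qed

lemma tri_mult:
  assumes m1: "1 \<le> m" and T: "triangular a m P" and L: "U_linear a Q"
  shows "triangular a (m + 1) (P * Q)"
proof -
  define d where "d = degree P"
  define e where "e = degree Q"
  have ad: "a \<le> d" using T unfolding triangular_def d_def by blast
  have ea: "e \<le> a" using L unfolding U_linear_def e_def by blast
  from T obtain q0 where q0: "0 < q0" "coeff P d = Qc q0 * U a ^ m"
    unfolding triangular_def d_def by blast
  have Tl: "\<And>l. d - a \<le> l \<Longrightarrow> l < d \<Longrightarrow> \<exists>q1. 0 < q1 \<and> (\<exists>Pl. in_CU (a + l + 1 - d) a Pl \<and>
            coeff P l = Qc q1 * U a ^ (m - 1) * U (a + l - d) + Pl)"
    using T unfolding triangular_def d_def by blast
  have Ql: "\<And>j. j \<le> e \<Longrightarrow> \<exists>q. 0 < q \<and> coeff Q j = Qc q * U (a + j - e)"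
    using L unfolding U_linear_def e_def by blast
  obtain q1 where q1: "0 < q1" "coeff Q e = Qc q1 * U a"
    using Ql[of e] by auto
  have um: "U a ^ m = U a * U a ^ (m - 1)" using m1 by (cases m) auto
  have lead: "coeff (P * Q) (d + e) = Qc (q0 * q1) * U a ^ (m + 1)"
    using coeff_mult_degree_sum[of P Q] q0 q1 by (simp add: d_def e_def Qc_mult algebra_simps)
  have deg: "degree (P * Q) = d + e"
  proof (rule deg_eq)
    show "degree (P * Q) \<le> d + e" using degree_mult_le[of P Q] d_def e_def by simp
    have "q0 * q1 \<noteq> 0" using q0 q1 by simp
    then show "coeff (P * Q) (d + e) \<noteq> 0" unfolding lead by (rule Qc_U_pow_nz)
  qed
  have RP: "in_RY a P" using T unfolding triangular_def by blast
  have RQ: "in_RY a Q" using L by (rule lin_RY)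
  show ?thesis unfolding triangular_def deg
  proof (intro conjI allI impI)
    show "in_RY a (P * Q)" unfolding in_RY_def coeff_mult
      using RP RQ unfolding in_RY_def by (auto intro!: in_R_sum in_R_mult)
    show "a \<le> d + e" using ad by simp
    fix k assume k: "d + e - a \<le> k \<and> k < d + e"
    define t where "t = d + e - k"
    have t: "1 \<le> t" "t \<le> a" "k = d + e - t" using k ad unfolding t_def by arith+
    have ke: "e \<le> k" using t ad by arith
    define M where "M = U a ^ m * U (a - t)"
    define J where "J = a - t + 1"
    define good where "good x \<longleftrightarrow> (\<exists>c\<ge>0. \<exists>R. in_CU J a R \<and> x = Qc c * M + R)" for x
    define goodp where "goodp x \<longleftrightarrow> (\<exists>c>0. \<exists>R. in_CU J a R \<and> x = Qc c * M + R)" for x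
    have good_add: "good (x + y)" if "good x" "good y" for x y
    proof -
      from that obtain c1 R1 c2 R2 where "c1 \<ge> 0" "in_CU J a R1" "x = Qc c1 * M + R1"
        "c2 \<ge> 0" "in_CU J a R2" "y = Qc c2 * M + R2" unfolding good_def by blast
      then show ?thesis unfolding good_def
        by (intro exI[of _ "c1 + c2"] conjI exI[of _ "R1 + R2"])
           (auto intro: in_CU_add simp: Qc_add algebra_simps)
    qed
    have goodp_add: "goodp (x + y)" if "goodp x" "good y" for x y
    proof -
      from that obtain c1 R1 c2 R2 where "c1 > 0" "in_CU J a R1" "x = Qc c1 * M + R1"
        "c2 \<ge> 0" "in_CU J a R2" "y = Qc c2 * M + R2" unfolding good_def goodp_def by blast
      then show ?thesis unfolding goodp_def
        by (intro exI[of _ "c1 + c2"] conjI exI[of _ "R1 + R2"])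
           (auto intro: in_CU_add simp: Qc_add algebra_simps)
    qed
    have good0: "good 0" unfolding good_def
      by (intro exI[of _ 0] conjI exI[of _ 0]) (auto simp: Qc_0 in_CU_0)
    have good_sum: "good (sum f S)" if "\<And>i. i \<in> S \<Longrightarrow> good (f i)" for f and S :: "nat set"
      using that by (induction S rule: infinite_finite_induct) (auto intro: good_add good0)
    have goodp_good: "good x" if "goodp x" for x
    proof -
      from that obtain c R where "c > 0" "in_CU J a R" "x = Qc c * M + R" unfolding goodp_def by blast
      then show ?thesis unfolding good_def by (intro exI[of _ c] conjI exI[of _ R]) auto
    qed
    have csum: "coeff (P * Q) k = (\<Sum>j\<le>e. coeff Q j * coeff P (k - j))"
    proof -
      have "coeff (P * Q) k = coeff (Q * P) k" by (simp add: mult.commute)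
      also have "\<dots> = (\<Sum>j\<le>k. coeff Q j * coeff P (k - j))" by (rule coeff_mult)
      also have "\<dots> = (\<Sum>j\<le>e. coeff Q j * coeff P (k - j))"
        by (rule sum.mono_neutral_right) (use ke in \<open>auto simp: e_def coeff_eq_0\<close>)
      finally show ?thesis .
    qed
    have term_e: "goodp (coeff Q e * coeff P (k - e))"
    proof -
      have "d - a \<le> k - e" "k - e < d" using t ad by arith+
      then obtain q2 Pl where h: "0 < q2" "in_CU (a + (k - e) + 1 - d) a Pl"
        "coeff P (k - e) = Qc q2 * U a ^ (m - 1) * U (a + (k - e) - d) + Pl"
        using Tl by blast
      have i1: "a + (k - e) + 1 - d = J" "a + (k - e) - d = a - t" using t ad unfolding J_def by arith+
      have "coeff Q e * coeff P (k - e) = Qc (q1 * q2) * M + Qc q1 * U a * Pl"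
        unfolding q1(2) h(3) i1 M_def um by (simp add: Qc_mult algebra_simps)
      moreover have "in_CU J a (Qc q1 * U a * Pl)" using h(2) i1 ad t
        by (intro in_CU_mult in_CU_Qc in_CU_U) (auto simp: J_def)
      moreover have "0 < q1 * q2" using q1 h by simp
      ultimately show ?thesis unfolding goodp_def by blast
    qed
    have term_good: "good (coeff Q j * coeff P (k - j))" if j: "j \<le> e" for j
    proof (cases "j = e")
      case True then show ?thesis using term_e goodp_good by simp
    next
      case False
      then have je: "j < e" using j by simp
      obtain qj where qj: "0 < qj" "coeff Q j = Qc qj * U (a + j - e)" using Ql[OF j] by blast
      show ?thesis
      proof (cases "d < k - j")
        case True
        then show ?thesis using good0 by (simp add: coeff_eq_0 d_def)
      next
        case False
        show ?thesis
        proof (cases "k - j = d")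
          case True
          have "a + j - e = a - t" using True t ad j by arith
          then have "coeff Q j * coeff P (k - j) = Qc (qj * q0) * M + 0"
            unfolding qj(2) True q0(2) M_def by (simp add: Qc_mult algebra_simps)
          moreover have "0 \<le> qj * q0" using qj q0 by simp
          ultimately show ?thesis unfolding good_def using in_CU_0 by blast
        next
          case False2: False
          have "d - a \<le> k - j" "k - j < d" using t ad j False False2 by arith+
          then obtain q2 Pl where h: "0 < q2" "in_CU (a + (k - j) + 1 - d) a Pl"
            "coeff P (k - j) = Qc q2 * U a ^ (m - 1) * U (a + (k - j) - d) + Pl"
            using Tl by blast
          have ineq: "J \<le> a + j - e" "a + j - e \<le> a" "J \<le> a + (k - j) - d" "a + (k - j) - d \<le> a"
            "J \<le> a + (k - j) + 1 - d" "J \<le> a"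
            using t ad j je False False2 unfolding J_def by arith+
          have "in_CU J a (coeff Q j * coeff P (k - j))"
            unfolding qj(2) h(3)
            by (intro in_CU_mult in_CU_add in_CU_Qc in_CU_U in_CU_pow in_CU_mono[OF _ h(2)] ineq order.refl)
          then have "coeff Q j * coeff P (k - j) = Qc 0 * M + coeff Q j * coeff P (k - j)
              \<and> in_CU J a (coeff Q j * coeff P (k - j))" by (simp add: Qc_0)
          then show ?thesis unfolding good_def by blast
        qed
      qed
    qed
    have "goodp (coeff (P * Q) k)"
    proof -
      have "{..e} = insert e {..<e}" by auto
      then have "coeff (P * Q) k = coeff Q e * coeff P (k - e) + (\<Sum>j<e. coeff Q j * coeff P (k - j))"
        unfolding csum by simp
      then show ?thesis using goodp_add[OF term_e good_sum[of "{..<e}"]] term_good by simp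
    qed
    then obtain c R where cR: "0 < c" "in_CU J a R" "coeff (P * Q) k = Qc c * M + R"
      unfolding goodp_def by blast
    have i2: "a + k + 1 - (d + e) = J" "a + k - (d + e) = a - t" using t ad unfolding J_def by arith+
    show "\<exists>q. 0 < q \<and> (\<exists>Pl. in_CU (a + k + 1 - (d + e)) a Pl \<and>
        coeff (P * Q) k = Qc q * U a ^ (m + 1 - 1) * U (a + k - (d + e)) + Pl)"
      unfolding i2 using cR unfolding M_def by (auto simp: mult.assoc)
  next
    show "\<exists>q. 0 < q \<and> coeff (P * Q) (d + e) = Qc q * U a ^ (m + 1)"
      using lead q0 q1 by (intro exI[of _ "q0 * q1"]) simp
  qed
qed

theorem mainTheorem4:
  fixes a m :: nat and P Q :: "lpoly poly"
  assumes "1 \<le> a" and "1 \<le> m"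
    and "triangular a m P" and "U_linear a Q"
  shows "(\<forall>q::rat. 0 < q \<longrightarrow> triangular a m (smult (Qc q) P) \<and> U_linear a (smult (Qc q) Q))
    \<and> (a + 1 \<le> Polynomial.degree P \<longrightarrow> triangular a m (pderiv P))
    \<and> (1 \<le> Polynomial.degree Q \<longrightarrow> U_linear a (pderiv Q))
    \<and> triangular a (m + 1) (P * Q)"
  using assms tri_smult lin_smult tri_pderiv lin_pderiv tri_mult by blast

end
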